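(* Let $S_{\text{thirds}}=(1,\mathbb{R}^{+},\{-\tfrac13,0,\tfrac13\},f_{\text{add}},\{\bot\}\cup\mathbb{Z}^{+},h_{\text{sqz}},x_0=0)$ and $\widehat{S}_{\text{binary}}=(1,\mathbb{R}^{+},\{\pm\tfrac{1}{2^p}\mid p\in\mathbb{Z}\},f_{\text{add}},\{\bot\}\cup\mathbb{Z}^{+},h_{\text{sqz}},\widehat{x}_0=0)$, where $f_{\text{add}}(x,u)=x+u$ and $$h_{\text{sqz}}(x)=\begin{cases} q & \text{if there is } q\in\mathbb{Z}^{+} \text{ with } -\frac{1}{4\cdot 2^q}\le x-\frac{q}{3}\le\frac{1}{4\cdot 2^q},\\ \bot & \text{otherwise.}\end{cases}$$ Then $\widehat{S}_{\text{binary}}$ is a $1$-illusion of $S_{\text{thirds}}$.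
   Context: A deterministic multi-robot transition system is a 7-tuple $(n,X,U,f,Y,h,x_0)$: $n$ robots, product state space $X$, product action space $U$, transition function $f:X\times U\to X$ (componentwise per robot), product observation space $Y$, observation function $h:X\to Y$ (componentwise per robot, $h^{(i)}$), initial state $x_0$; it evolves by $x_{k+1}=f(x_k,u_k)$, $y_k=h(x_k)$. Here both systems have a single robot. When a primary system $\widehat{S}$ (hatted quantities) emulates a secondary system $S$, a robot policy $\widehat{\pi}^{(i)}$ for robot $i$ of $\widehat{S}$ maps its own action history $\widehat{u}^{(i)}_0,\dots,\widehat{u}^{(i)}_k$, its observation history $\widehat{y}^{(i)}_0,\dots,\widehat{y}^{(i)}_k$, and the state history $x_0,\dots,x_\ell$ of the secondary system (with $\ell$ possibly different from $k$) to an action $\widehat{u}^{(i)}_k$. Robot policies in $S$ choose actions from histories in the same manner. $\widehat{S}$ is an $m$-illusion of $S$ (with $0<m\le n$) if there exist (i) robot policies $\widehat{\pi}^{(1)},\dots,\widehat{\pi}^{(\widehat{n})}$ in $\widehat{S}$, (ii) a strictly increasing function $z:\mathbb{Z}^+\to\mathbb{Z}^+$, and (iii) functions $\rho_k:\{1,\dots,m\}\to\{1,\dots,\widehat{n}\}$, such that for any robot policies $\pi^{(1)},\dots,\pi^{(n)}$ in $S$, for all $k\ge0$ and $1\le i\le m$, $h^{(i)}(x_k)=\widehat{h}^{(\rho_k(i))}(\widehat{x}_{z(k)})$, where $x$ and $\widehat{x}$ are the state trajectories of $S$ and $\widehat{S}$. *)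

theory Defs
  imports Main Complex_Main
begin

(* Single-robot systems. States and actions are reals, observations are
   "nat option": None stands for \<bottom>, Some q for q \<in> Z^+ (q \<ge> 1). *)

definition U_thirds :: "real set" where
  "U_thirds = {-1/3, 0, 1/3}"

definition U_binary :: "real set" where
  "U_binary = {u. \<exists>p::int. u = 1 / 2 powi p \<or> u = - (1 / 2 powi p)}"

definition f_add :: "real \<Rightarrow> real \<Rightarrow> real" where
  "f_add x u = x + u"

definition sqz_window :: "real \<Rightarrow> nat \<Rightarrow> bool" where
  "sqz_window x q \<longleftrightarrow> q \<ge> 1 \<and> - (1 / (4 * 2 ^ q)) \<le> x - real q / 3 \<and> x - real q / 3 \<le> 1 / (4 * 2 ^ q)"

definition h_sqz :: "real \<Rightarrow> nat option" where
  "h_sqz x = (if \<exists>q. sqz_window x q then Some (THE q. sqz_window x q) else None)"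

fun sec_run :: "(real list \<Rightarrow> nat option list \<Rightarrow> real) \<Rightarrow> nat
                 \<Rightarrow> real \<times> real list \<times> nat option list" where
  "sec_run \<pi> 0 = (0, [], [h_sqz 0])"
| "sec_run \<pi> (Suc k) =
     (case sec_run \<pi> k of (x, us, ys) \<Rightarrow>
        let u = \<pi> us ys; x' = f_add x u in (x', us @ [u], ys @ [h_sqz x']))"

definition sec_state :: "(real list \<Rightarrow> nat option list \<Rightarrow> real) \<Rightarrow> nat \<Rightarrow> real" where
  "sec_state \<pi> k = fst (sec_run \<pi> k)"

(* Admissible robot policy of S_thirds: actions in U, trajectory stays in X = R^+ = [0,\<infinity>). *)
definition sec_admissible :: "(real list \<Rightarrow> nat option list \<Rightarrow> real) \<Rightarrow> bool" where
  "sec_admissible \<pi> \<longleftrightarrow> (\<forall>us ys. \<pi> us ys \<in> U_thirds) \<and> (\<forall>k. sec_state \<pi> k \<ge> 0)"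

fun prim_run :: "(real list \<Rightarrow> nat option list \<Rightarrow> real list \<Rightarrow> real) \<Rightarrow> (nat \<Rightarrow> real)
                  \<Rightarrow> (nat \<Rightarrow> nat) \<Rightarrow> nat \<Rightarrow> real \<times> real list \<times> nat option list" where
  "prim_run \<pi>h xs ell 0 = (0, [], [h_sqz 0])"
| "prim_run \<pi>h xs ell (Suc j) =
     (case prim_run \<pi>h xs ell j of (x, us, ys) \<Rightarrow>
        let u = \<pi>h us ys (map xs [0..<Suc (ell j)]); x' = f_add x u
        in (x', us @ [u], ys @ [h_sqz x']))"

definition prim_state :: "(real list \<Rightarrow> nat option list \<Rightarrow> real list \<Rightarrow> real) \<Rightarrow> (nat \<Rightarrow> real)
                  \<Rightarrow> (nat \<Rightarrow> nat) \<Rightarrow> nat \<Rightarrow> real" where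
  "prim_state \<pi>h xs ell j = fst (prim_run \<pi>h xs ell j)"

(* At primary step j, the primary knows the secondary states up to the next
   secondary step it has to match: ell j = least l with j < z l. *)
definition lookahead :: "(nat \<Rightarrow> nat) \<Rightarrow> nat \<Rightarrow> nat" where
  "lookahead z j = (LEAST l. j < z l)"

end

theory Submission
  imports Defs
begin

definition S :: "nat \<Rightarrow> real" where "S l = 1 / 2^(l+3)"
definition Tg :: "nat \<Rightarrow> real \<Rightarrow> real" where
  "Tg l x = 2 * S l * of_int \<lfloor>x / (2 * S l)\<rfloor>"
definition pol :: "real list \<Rightarrow> nat option list \<Rightarrow> real list \<Rightarrow> real" where
  "pol us ys xs = (let l = length xs - 1 in if sum_list us \<le> Tg l (last xs) then S l else - S l)"
definition zz :: "nat \<Rightarrow> nat" where "zz l = 2^(l+4) - 16"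
definition gg :: "int \<Rightarrow> int" where "gg w = (if w \<le> 0 then w + 1 else w - 1)"

lemma S_pos: "S l > 0" by (simp add: S_def)
lemma S_Suc: "S l = 2 * S (Suc l)" unfolding S_def by (simp add: field_simps power_add)
lemma S_L: "S l * 2^(l+3) = 1" by (simp add: S_def)

lemma pol_U: "pol us ys xs \<in> U_binary"
proof -
  have "S l \<in> U_binary" "- S l \<in> U_binary" for l
  proof -
    have "S l = 1 / 2 powi (int (l+3))" by (simp only: power_int_of_nat S_def)
    then show "S l \<in> U_binary" "- S l \<in> U_binary" unfolding U_binary_def by auto
  qed
  then show ?thesis unfolding pol_def Let_def by simp
qed

lemma gg_zero: "\<bar>w\<bar> \<le> int n \<Longrightarrow> even (int n + w) \<Longrightarrow> (gg^^n) w = 0"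
proof (induction n arbitrary: w)
  case 0 then show ?case by simp
next
  case (Suc n)
  have "\<bar>gg w\<bar> \<le> int n" using Suc.prems unfolding gg_def by presburger
  moreover have "even (int n + gg w)" using Suc.prems unfolding gg_def by presburger
  ultimately show ?case using Suc.IH by (simp add: funpow_Suc_right del: funpow.simps)
qed

lemma gg_min: "(gg^^n) w \<ge> min w 0"
proof (induction n arbitrary: w)
  case 0 then show ?case by simp
next
  case (Suc n)
  have "min (gg w) 0 \<ge> min w 0" by (auto simp: gg_def)
  then show ?case using Suc.IH[of "gg w"] by (simp add: funpow_Suc_right del: funpow.simps)
qed

lemma walk:
  fixes p :: "nat \<Rightarrow> real"
  assumes step: "\<And>i. i < L \<Longrightarrow> p (Suc i) = p i + (if p i \<le> t then s else - s)"
    and s: "s > 0" and p0: "p 0 = t + s * of_int w" and ev: "even w" "even L"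
    and wL: "\<bar>w\<bar> \<le> int L"
  shows "p L = t" and "\<forall>i \<le> L. p i \<ge> min (p 0) t"
proof -
  have key: "i \<le> L \<Longrightarrow> p i = t + s * of_int ((gg^^i) w)" for i
  proof (induction i)
    case 0 then show ?case using p0 by simp
  next
    case (Suc i)
    then have h: "p i = t + s * of_int ((gg^^i) w)" by simp
    have iff: "(p i \<le> t) = ((gg^^i) w \<le> 0)" using h s
      by (simp add: mult_le_0_iff)
    have g: "(gg^^Suc i) w = gg ((gg^^i) w)" by simp
    show ?case using step[of i] Suc.prems h iff unfolding g
      by (auto simp: gg_def algebra_simps)
  qed
  have "(gg^^L) w = 0" using gg_zero wL ev by simp
  then show "p L = t" using key[of L] by simp
  show "\<forall>i \<le> L. p i \<ge> min (p 0) t"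
  proof (intro allI impI)
    fix i assume "i \<le> L"
    then have e: "p i = t + s * of_int ((gg^^i) w)" by (rule key)
    have "of_int (min w 0) \<le> (of_int ((gg^^i) w) :: real)" using gg_min by simp
    then have "s * of_int (min w 0) \<le> s * of_int ((gg^^i) w)" using s by simp
    moreover have "t + s * of_int (min w 0) = min (p 0) t" using p0 s
      by (cases "w \<le> 0") (auto simp: min_def mult_le_0_iff)
    ultimately show "p i \<ge> min (p 0) t" using e by linarith
  qed
qed

lemma prim_sum: "fst (prim_run ph xs ell j) = sum_list (fst (snd (prim_run ph xs ell j)))"
proof (induction j)
  case 0 then show ?case by simp
next
  case (Suc j)
  obtain x us ys where "prim_run ph xs ell j = (x, us, ys)" by (cases "prim_run ph xs ell j") auto
  with Suc show ?case by (simp add: f_add_def Let_def)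
qed

lemma prim_step: "prim_state pol xs ell (Suc j) = prim_state pol xs ell j +
   (if prim_state pol xs ell j \<le> Tg (ell j) (xs (ell j)) then S (ell j) else - S (ell j))"
proof -
  obtain x us ys where r: "prim_run pol xs ell j = (x, us, ys)" by (cases "prim_run pol xs ell j") auto
  have "x = sum_list us" using prim_sum[of pol xs ell j] r by simp
  moreover have "last (map xs [0..<Suc (ell j)]) = xs (ell j)" by simp
  ultimately show ?thesis using r by (simp add: prim_state_def f_add_def Let_def pol_def)
qed

lemma sec_step: "\<exists>u \<in> U. sec_state \<pi> (Suc k) = sec_state \<pi> k + u" if "\<forall>us ys. \<pi> us ys \<in> U"
proof -
  obtain x us ys where r: "sec_run \<pi> k = (x, us, ys)" by (cases "sec_run \<pi> k") auto
  then show ?thesis using that by (auto simp: sec_state_def f_add_def Let_def)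
qed

lemma two_pow_ge: "1 \<le> q \<Longrightarrow> (2::real) ^ q \<ge> 2"
  using power_increasing[of 1 q "2::real"] by simp

lemma win_unique: assumes "sqz_window y q" "sqz_window y q'" shows "q = q'"
proof (rule ccontr)
  assume ne: "q \<noteq> q'"
  have a: "(2::real) ^ q \<ge> 2" "(2::real) ^ q' \<ge> 2" using assms
    by (simp_all add: sqz_window_def two_pow_ge)
  have b: "1 / (4 * 2 ^ q) \<le> (1/8::real)" "1 / (4 * 2 ^ q') \<le> (1/8::real)" using a
    by (auto simp: field_simps)
  have c: "\<bar>real q / 3 - real q' / 3\<bar> \<ge> 1/3" using ne
    by (cases "q < q'") (auto simp: field_simps)
  show False using assms b c unfolding sqz_window_def by linarith
qed

lemma h_some: "sqz_window y q \<Longrightarrow> h_sqz y = Some q"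
  unfolding h_sqz_def using win_unique by (auto intro: the_equality)

lemma h_zero: "h_sqz 0 = None"
proof -
  have "\<not> sqz_window 0 q" for q
  proof
    assume w: "sqz_window 0 q"
    then have "(2::real) ^ q \<ge> 2" 
      by (simp add: sqz_window_def two_pow_ge)
    then have "1 / (4 * 2 ^ q) \<le> (1/8::real)" by (auto simp: field_simps)
    moreover have "real q \<ge> 1" using w by (simp add: sqz_window_def)
    ultimately show False using w unfolding sqz_window_def by linarith
  qed
  then show ?thesis by (simp add: h_sqz_def)
qed

lemma Tg_bounds: "Tg l x \<le> x" "x - Tg l x < 2 * S l"
proof -
  have sp: "2 * S l > 0" using S_pos by simp
  let ?f = "\<lfloor>x / (2 * S l)\<rfloor>"
  have h1: "of_int ?f \<le> x / (2 * S l)" and h2: "x / (2 * S l) < of_int ?f + 1" by linarith+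
  have e: "2 * S l * (x / (2 * S l)) = x" using sp by simp
  have "2 * S l * of_int ?f \<le> 2 * S l * (x / (2 * S l))" using mult_left_mono[OF h1, of "2 * S l"] sp by linarith
  moreover have "2 * S l * (x / (2 * S l)) < 2 * S l * (of_int ?f + 1)"
    using mult_strict_left_mono[OF h2 sp] .
  ultimately have "2 * S l * of_int ?f \<le> x" "x < 2 * S l * (of_int ?f + 1)" using e by simp_all
  then show "Tg l x \<le> x" "x - Tg l x < 2 * S l" unfolding Tg_def by (simp_all add: algebra_simps)
qed

lemma Tg_nonneg: "x \<ge> 0 \<Longrightarrow> Tg l x \<ge> 0"
  unfolding Tg_def using S_pos[of l] by simp

lemma Tg_zero: "Tg l 0 = 0" unfolding Tg_def by simp

lemma obs: assumes "x = real_of_int n / 3" "0 \<le> n" "n \<le> int l"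
  shows "h_sqz (Tg l x) = h_sqz x"
proof (cases "n = 0")
  case True then show ?thesis using assms by (simp add: Tg_zero)
next
  case False
  define m where "m = nat n"
  have m: "x = real m / 3" "1 \<le> m" "m \<le> l" using assms False by (auto simp: m_def)
  have "(2::real) ^ m \<le> 2 ^ l" using m by (simp add: power_increasing)
  then have "2 * S l \<le> 1 / (4 * 2 ^ m)" unfolding S_def by (simp add: field_simps power_add)
  moreover have "Tg l x \<le> x" "x - Tg l x < 2 * S l" by (rule Tg_bounds)+
  moreover have "0 < 1 / (4 * (2::real) ^ m)" by simp
  ultimately have "sqz_window (Tg l x) m" "sqz_window x m" using m(1,2)
    unfolding sqz_window_def by (simp_all only: simp_thms, linarith+)
  then show ?thesis by (simp add: h_some)
qed

lemma zz_Suc: "zz (Suc l) = zz l + 2^(l+4)"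
proof -
  have "(16::nat) \<le> 2^(l+4)" using power_increasing[of 4 "l+4" "2::nat"] by simp
  moreover have e: "(2::nat)^(Suc l + 4) = 2^(l+4) + 2^(l+4)"
    by (simp only: add_Suc power_Suc)
  ultimately show ?thesis unfolding zz_def e by linarith
qed

lemma zz_mono: "strict_mono zz"
  unfolding strict_mono_Suc_iff using zz_Suc by simp

lemma zz_ge: "j \<le> zz j"
proof (induction j)
  case 0 then show ?case by simp
next
  case (Suc j)
  have "(1::nat) \<le> 2^(j+4)" by simp
  then show ?case using Suc zz_Suc[of j] by linarith
qed

lemma lk: assumes "zz l \<le> j" "j < zz (Suc l)" shows "lookahead zz j = Suc l"
  unfolding lookahead_def
proof (rule Least_equality)
  show "j < zz (Suc l)" by (rule assms(2))
  fix m assume "j < zz m"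
  show "Suc l \<le> m"
  proof (rule ccontr)
    assume "\<not> Suc l \<le> m"
    then have "zz m \<le> zz l" using zz_mono by (simp add: strict_mono_less_eq)
    then show False using assms(1) \<open>j < zz m\<close> by simp
  qed
qed

lemma S_le: "S l \<le> 1/8"
proof -
  have "(8::real) \<le> 2^(l+3)" using power_increasing[of 3 "l+3" "2::real"] by simp
  then show ?thesis unfolding S_def by (simp add: field_simps)
qed

lemma main_pi:
  assumes adm: "sec_admissible \<pi>"
  shows "(\<forall>j. prim_state pol (sec_state \<pi>) (lookahead zz) j \<ge> 0) \<and>
         (\<forall>k. h_sqz (sec_state \<pi> k) = h_sqz (prim_state pol (sec_state \<pi>) (lookahead zz) (zz k)))"
proof -
  define X where "X = sec_state \<pi>"
  define p where "p = prim_state pol X (lookahead zz)"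
  have U: "\<forall>us ys. \<pi> us ys \<in> U_thirds" and Xnn: "\<And>k. X k \<ge> 0"
    using adm unfolding sec_admissible_def X_def by auto
  have X0: "X 0 = 0" by (simp add: X_def sec_state_def)
  have Xd: "\<bar>X (Suc k) - X k\<bar> \<le> 1/3" for k
  proof -
    obtain u where "u \<in> U_thirds" "X (Suc k) = X k + u" using sec_step[OF U] X_def by blast
    then show ?thesis by (auto simp: U_thirds_def)
  qed
  have Xf: "\<exists>n::int. X k = of_int n / 3 \<and> n \<le> int k" for k
  proof (induction k)
    case 0 then show ?case using X0 by (intro exI[of _ 0]) simp
  next
    case (Suc k)
    then obtain n where n: "X k = of_int n / 3" "n \<le> int k" by blast
    obtain u where u: "u \<in> U_thirds" "X (Suc k) = X k + u" using sec_step[OF U] X_def by blast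
    show ?case
    proof (cases "u = 1/3")
      case True then show ?thesis using n u by (intro exI[of _ "n+1"]) (simp add: field_simps)
    next
      case F1: False
      show ?thesis
      proof (cases "u = 0")
        case True then show ?thesis using n u by (intro exI[of _ "n"]) simp
      next
        case False
        then have "u = -1/3" using F1 u by (auto simp: U_thirds_def)
        then show ?thesis using n u by (intro exI[of _ "n - 1"]) (simp add: field_simps)
      qed
    qed
  qed
  have pstep: "p (Suc j) = p j + (if p j \<le> Tg (lookahead zz j) (X (lookahead zz j))
      then S (lookahead zz j) else - S (lookahead zz j))" for j
    unfolding p_def by (rule prim_step)
  have p0: "p 0 = 0" by (simp add: p_def prim_state_def)
  have blk: "p (zz l) = Tg l (X l) \<and> (\<forall>j \<le> zz l. p j \<ge> 0)" for l
  proof (induction l)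
    case 0 then show ?case using p0 X0 by (simp add: zz_def Tg_zero)
  next
    case (Suc l)
    then have IH1: "p (zz l) = Tg l (X l)" and IH2: "\<forall>j \<le> zz l. p j \<ge> 0" by auto
    define L :: nat where "L = 2^(l+4)"
    define t where "t = Tg (Suc l) (X (Suc l))"
    define a where "a = \<lfloor>X l / (2 * S l)\<rfloor>"
    define b where "b = \<lfloor>X (Suc l) / (2 * S (Suc l))\<rfloor>"
    define w where "w = 4 * a - 2 * b"
    have zS: "zz (Suc l) = zz l + L" using zz_Suc L_def by simp
    have st: "p (zz l + Suc i) = p (zz l + i) + (if p (zz l + i) \<le> t then S (Suc l) else - S (Suc l))"
      if "i < L" for i
    proof -
      have "lookahead zz (zz l + i) = Suc l" using that zS by (intro lk) auto
      then show ?thesis using pstep[of "zz l + i"] t_def by simp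
    qed
    have SS: "S l = 2 * S (Suc l)" by (rule S_Suc)
    have tl: "Tg l (X l) = 4 * S (Suc l) * of_int a" unfolding Tg_def a_def SS by simp
    have tt: "t = 2 * S (Suc l) * of_int b" unfolding t_def Tg_def b_def by simp
    have pz: "p (zz l + 0) = t + S (Suc l) * of_int w"
      using IH1 tl tt unfolding w_def by (simp add: algebra_simps)
    have evw: "even w" unfolding w_def by simp
    have evL: "even L" unfolding L_def by simp
    have d: "\<bar>Tg l (X l) - t\<bar> < 1"
    proof -
      have "Tg l (X l) \<le> X l" "X l - Tg l (X l) < 2 * S l" by (rule Tg_bounds)+
      moreover have "t \<le> X (Suc l)" "X (Suc l) - t < 2 * S (Suc l)" unfolding t_def by (rule Tg_bounds)+
      moreover have "S l \<le> 1/8" "S (Suc l) \<le> 1/8" by (rule S_le)+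
      ultimately show ?thesis using Xd[of l] by linarith
    qed
    have wL: "\<bar>w\<bar> \<le> int L"
    proof -
      have "Tg l (X l) - t = S (Suc l) * of_int w" using pz IH1 by simp
      then have "S (Suc l) * \<bar>of_int w\<bar> < 1" using d S_pos[of "Suc l"] by (simp add: abs_mult)
      moreover have "S (Suc l) * real L = 1" using S_L[of "Suc l"] unfolding L_def by (simp add: add.commute)
      ultimately have "S (Suc l) * \<bar>of_int w\<bar> < S (Suc l) * real L" by simp
      then have "\<bar>of_int w\<bar> < (real L)" using S_pos[of "Suc l"] by simp
      then have "real_of_int \<bar>w\<bar> < real_of_int (int L)" by simp
      then show ?thesis by linarith
    qed
    have W1: "p (zz l + L) = t" and W2: "\<forall>i \<le> L. p (zz l + i) \<ge> min (p (zz l + 0)) t"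
      using walk[where p="\<lambda>i. p (zz l + i)" and L=L and t=t and s="S (Suc l)" and w=w,
          OF st S_pos pz evw evL wL] by auto
    have tnn: "t \<ge> 0" unfolding t_def by (rule Tg_nonneg[OF Xnn])
    have pznn: "p (zz l) \<ge> 0" using IH1 Tg_nonneg[OF Xnn] by simp
    show ?case
    proof
      show "p (zz (Suc l)) = Tg (Suc l) (X (Suc l))" using W1 zS t_def by simp
      show "\<forall>j \<le> zz (Suc l). p j \<ge> 0"
      proof (intro allI impI)
        fix j assume j: "j \<le> zz (Suc l)"
        show "p j \<ge> 0"
        proof (cases "j \<le> zz l")
          case True then show ?thesis using IH2 by simp
        next
          case False
          then have "j = zz l + (j - zz l)" "j - zz l \<le> L" using j zS by auto
          then have "p j \<ge> min (p (zz l + 0)) t" using W2 by metis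
          then show ?thesis using pznn tnn by simp
        qed
      qed
    qed
  qed
  have A: "\<forall>j. p j \<ge> 0" using blk zz_ge by blast
  have B: "h_sqz (X k) = h_sqz (p (zz k))" for k
  proof -
    obtain n where n: "X k = of_int n / 3" "n \<le> int k" using Xf by blast
    have "0 \<le> n" using Xnn[of k] n(1) by simp
    then have "h_sqz (Tg k (X k)) = h_sqz (X k)" using obs n by blast
    then show ?thesis using blk by simp
  qed
  show ?thesis using A B unfolding p_def X_def by simp
qed

theorem lemma1:
  shows "\<exists>(\<pi>h :: real list \<Rightarrow> nat option list \<Rightarrow> real list \<Rightarrow> real) (z :: nat \<Rightarrow> nat).
           (\<forall>us ys xs. \<pi>h us ys xs \<in> U_binary) \<and> strict_mono z \<and>
           (\<forall>\<pi>. sec_admissible \<pi> \<longrightarrow>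
              (\<forall>j. prim_state \<pi>h (sec_state \<pi>) (lookahead z) j \<ge> 0) \<and>
              (\<forall>k. h_sqz (sec_state \<pi> k) =
                    h_sqz (prim_state \<pi>h (sec_state \<pi>) (lookahead z) (z k))))"
  apply (rule exI[of _ pol], rule exI[of _ zz])
  using pol_U zz_mono main_pi by blast

end
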